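(* Under the hypotheses of either of the following two results, the point $(\theta^*,\theta^* )$ is in fact uniformly globally exponentially stable: (i) the system $\dot\theta=-\beta(\theta-\vartheta)\mathcal{N}_t$, $\dot\vartheta=-\gamma\phi(t)\phi^T(t)(\theta-\theta^* )$; (ii) the system $\dot\theta=-\beta(\theta-\vartheta)$, $\dot\vartheta=-\frac{\gamma}{\mathcal{N}_t}\phi(t)\phi^T(t)(\theta-\theta^* )$; where in both cases $\phi:\mathbb{R}_{\ge0}\to\mathbb{R}^n$ is piecewise continuous with $|\phi(t)|\le M$ and $\int_t^{t+T}\phi\phi^T\,ds\ge\delta I_n$ for all $t\ge0$ (some $M,T,\delta>0$), $\mathcal{N}_t=1+\mu\phi^T(t)\phi(t)$, and $\beta,\gamma,\mu>0$ with $\beta\ge2\gamma/\mu$. That is, there exist $c>0$, $\alpha>0$ such that every solution with initial condition $(x_\circ,t_\circ)$ satisfies $|x(t)-(\theta^*,\theta^* )|\le c\,|x_\circ-(\theta^*,\theta^* )|\,e^{-\alpha(t-t_\circ)}$ for all $t\ge t_\circ$.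
   Context: $x=(\theta,\vartheta)\in\mathbb{R}^{2n}$, $\theta^*\in\mathbb{R}^n$ fixed, $|\cdot|$ the Euclidean norm. *)

theory Defs
  imports "HOL-Analysis.Analysis"
begin

definition outer :: "real ^ 'n \<Rightarrow> real ^ 'n \<Rightarrow> real ^ 'n ^ 'n" where
  "outer u v = (\<chi> i j. u $ i * v $ j)"

definition mat_ge :: "real ^ 'n ^ 'n \<Rightarrow> real ^ 'n ^ 'n \<Rightarrow> bool" where
  "mat_ge A B \<longleftrightarrow> (\<forall>v. 0 \<le> v \<bullet> ((A - B) *v v))"

definition piecewise_continuous_nonneg :: "(real \<Rightarrow> 'a::real_normed_vector) \<Rightarrow> bool" where
  "piecewise_continuous_nonneg f \<longleftrightarrow>
    (\<forall>a b. 0 \<le> a \<longrightarrow> (\<exists>S. finite S \<and> continuous_on ({a..b} - S) f \<and>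
       (\<forall>s\<in>S. (\<exists>l. (f \<longlongrightarrow> l) (at s within {a..<s})) \<and>
                (\<exists>r. (f \<longlongrightarrow> r) (at s within {s<..b})))))"

text \<open>Solution (Caratheodory sense, integral form) of x' = F t x on [t0,\<infinity>)
  with x(t0) = x0.\<close>
definition is_solution ::
  "(real \<Rightarrow> 'a \<Rightarrow> 'a::euclidean_space) \<Rightarrow> real \<Rightarrow> 'a \<Rightarrow> (real \<Rightarrow> 'a) \<Rightarrow> bool" where
  "is_solution F t0 x0 x \<longleftrightarrow> continuous_on {t0..} x \<and> x t0 = x0 \<and>
     (\<forall>t\<ge>t0. ((\<lambda>s. F s (x s)) has_integral (x t - x0)) {t0..t})"

definition UGES :: "(real \<Rightarrow> 'a \<Rightarrow> 'a::euclidean_space) \<Rightarrow> 'a \<Rightarrow> bool" where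
  "UGES F xs \<longleftrightarrow> (\<exists>c>0. \<exists>\<alpha>>0. \<forall>t0 x0 x. 0 \<le> t0 \<longrightarrow> is_solution F t0 x0 x \<longrightarrow>
      (\<forall>t\<ge>t0. norm (x t - xs) \<le> c * norm (x0 - xs) * exp (- \<alpha> * (t - t0))))"

definition Nt :: "real \<Rightarrow> (real \<Rightarrow> real ^ 'n) \<Rightarrow> real \<Rightarrow> real" where
  "Nt \<mu> \<phi> t = 1 + \<mu> * (\<phi> t \<bullet> \<phi> t)"

definition sys1 ::
  "real \<Rightarrow> real \<Rightarrow> real \<Rightarrow> (real \<Rightarrow> real ^ 'n) \<Rightarrow> real ^ 'n \<Rightarrow>
   real \<Rightarrow> (real ^ 'n) \<times> (real ^ 'n) \<Rightarrow> (real ^ 'n) \<times> (real ^ 'n)" where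
  "sys1 \<beta> \<gamma> \<mu> \<phi> \<theta>s t x =
     (- (\<beta> * Nt \<mu> \<phi> t) *\<^sub>R (fst x - snd x),
      - \<gamma> *\<^sub>R (outer (\<phi> t) (\<phi> t) *v (fst x - \<theta>s)))"

definition sys2 ::
  "real \<Rightarrow> real \<Rightarrow> real \<Rightarrow> (real \<Rightarrow> real ^ 'n) \<Rightarrow> real ^ 'n \<Rightarrow>
   real \<Rightarrow> (real ^ 'n) \<times> (real ^ 'n) \<Rightarrow> (real ^ 'n) \<times> (real ^ 'n)" where
  "sys2 \<beta> \<gamma> \<mu> \<phi> \<theta>s t x =
     (- \<beta> *\<^sub>R (fst x - snd x),
      - (\<gamma> / Nt \<mu> \<phi> t) *\<^sub>R (outer (\<phi> t) (\<phi> t) *v (fst x - \<theta>s)))"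

end

theory Submission
  imports Defs
begin


lemma pc_integrable:
  fixes f :: "real \<Rightarrow> real"
  assumes S: "finite S" and c: "continuous_on ({a..b} - S) f" and B: "\<forall>s\<in>{a..b}. \<bar>f s\<bar> \<le> B"
  shows "f integrable_on {a..b}"
proof -
  have L: "{a..b} - S \<in> sets lebesgue"
    using S by (simp add: finite_imp_closed sets.Diff)
  have m: "f \<in> borel_measurable (lebesgue_on ({a..b}-S))"
    by (rule continuous_imp_measurable_on_sets_lebesgue[OF c L])
  have neg: "negligible (({a..b} - S - {a..b}) \<union> ({a..b} - ({a..b} - S)))"
    using S by (auto intro: negligible_subset[OF negligible_finite[OF S]])
  have "(\<lambda>_. B) integrable_on {a..b}" by (rule integrable_continuous_interval) (rule continuous_on_const)
  then have g: "(\<lambda>_. B) integrable_on {a..b} - S"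
    using integrable_spike_set_eq[OF neg] by blast
  have "f absolutely_integrable_on ({a..b}-S)"
    by (rule measurable_bounded_by_integrable_imp_absolutely_integrable[OF m L g]) (use B in auto)
  then have "f integrable_on ({a..b}-S)" by (simp add: absolutely_integrable_on_def)
  then show ?thesis using integrable_spike_set_eq[OF neg] by blast
qed

lemma deriv_cmp:
  fixes f h f' :: "real \<Rightarrow> real"
  assumes S: "finite S" and ab: "a \<le> b" and c: "continuous_on {a..b} f"
    and d: "\<And>s. s \<in> {a<..<b}-S \<Longrightarrow> (f has_real_derivative f' s) (at s)"
    and le: "\<And>s. s \<in> {a<..<b}-S \<Longrightarrow> f' s \<le> h s"
    and h: "h integrable_on {a..b}"
  shows "f b - f a \<le> integral {a..b} h"
proof -
  define g where "g s = (if s \<in> {a<..<b}-S then f' s else h s)" for s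
  have "(g has_integral (f b - f a)) {a..b}"
    apply (rule fundamental_theorem_of_calculus_interior_strong[OF S ab _ c])
    using d by (simp add: g_def has_real_derivative_iff_has_vector_derivative[symmetric])
  moreover have "(h has_integral integral {a..b} h) {a..b}" using h by blast
  ultimately show ?thesis
    by (rule has_integral_le) (use le in \<open>auto simp: g_def\<close>)
qed

lemma hd_inner:
  fixes u w :: "real \<Rightarrow> 'a::real_inner"
  assumes "(u has_vector_derivative u') (at s)" "(w has_vector_derivative w') (at s)"
  shows "((\<lambda>s. u s \<bullet> w s) has_real_derivative (u s \<bullet> w' + u' \<bullet> w s)) (at s)"
  using bounded_bilinear.has_vector_derivative[OF bounded_bilinear_inner assms]
  by (simp add: has_real_derivative_iff_has_vector_derivative)

lemma hd_sq:
  fixes u :: "real \<Rightarrow> 'a::real_inner"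
  assumes "(u has_vector_derivative u') (at s)"
  shows "((\<lambda>s. u s \<bullet> u s) has_real_derivative 2 * (u s \<bullet> u')) (at s)"
  using hd_inner[OF assms assms] by (simp add: inner_commute)




locale core =
  fixes \<phi> z2 e d2 de :: "real \<Rightarrow> real^'n" and t0 M T \<delta> a b c c' c2 :: real
  assumes pos: "M > 0" "T > 0" "\<delta> > 0" "a > 0" "b > 0" "c \<ge> 0" "c' \<ge> 0" "c2 \<ge> 0"
    and bnd: "\<And>s. s \<ge> t0 \<Longrightarrow> norm (\<phi> s) \<le> M"
    and contz: "continuous_on {t0..} z2" and conte: "continuous_on {t0..} e"
    and pcw: "\<And>\<alpha> \<beta>. t0 \<le> \<alpha> \<Longrightarrow> \<exists>S. finite S \<and> continuous_on ({\<alpha>..\<beta>}-S) \<phi> \<and>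
        (\<forall>s\<in>{\<alpha><..<\<beta>}-S. (z2 has_vector_derivative d2 s) (at s) \<and> (e has_vector_derivative de s) (at s))"
    and H1: "\<And>s. s \<ge> t0 \<Longrightarrow> 2*(z2 s \<bullet> d2 s) + 2*(e s \<bullet> de s) \<le> -a*(\<phi> s \<bullet> (z2 s + e s))^2 - b*(e s \<bullet> e s)"
    and H2: "\<And>s. s \<ge> t0 \<Longrightarrow> norm (d2 s) \<le> c2 * \<bar>\<phi> s \<bullet> (z2 s + e s)\<bar>"
    and H3: "\<And>s. s \<ge> t0 \<Longrightarrow> 2*(e s \<bullet> de s) \<ge> -c*(e s \<bullet> e s) - c'*(\<phi> s \<bullet> (z2 s + e s))^2"
    and PE: "\<And>t v. t \<ge> t0 \<Longrightarrow> \<delta> * (v \<bullet> v) \<le> integral {t..t+T} (\<lambda>s. (\<phi> s \<bullet> v)^2)"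
begin

definition V where "V s = z2 s \<bullet> z2 s + e s \<bullet> e s"
definition p where "p s = \<phi> s \<bullet> (z2 s + e s)"

lemma V_nonneg: "V s \<ge> 0" by (simp add: V_def)

lemma contV: "t0 \<le> \<alpha> \<Longrightarrow> continuous_on {\<alpha>..\<beta>} V"
  unfolding V_def
  by (intro continuous_intros; rule continuous_on_subset[OF contz] continuous_on_subset[OF conte]; auto)

lemma bounded_ze: "t0 \<le> \<alpha> \<Longrightarrow> \<exists>B. \<forall>s\<in>{\<alpha>..\<beta>}. norm (z2 s) \<le> B \<and> norm (e s) \<le> B"
proof -
  assume "t0 \<le> \<alpha>"
  then have "{\<alpha>..\<beta>} \<subseteq> {t0..}" by auto
  then have "compact (z2 ` {\<alpha>..\<beta>})" "compact (e ` {\<alpha>..\<beta>})"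
    by (auto intro!: compact_continuous_image continuous_on_subset[OF contz] continuous_on_subset[OF conte])
  then obtain B1 B2 where "\<forall>x\<in>z2 ` {\<alpha>..\<beta>}. norm x \<le> B1" "\<forall>x\<in>e ` {\<alpha>..\<beta>}. norm x \<le> B2"
    by (meson bounded_iff compact_imp_bounded)
  then show ?thesis by (intro exI[of _ "max B1 B2"]) auto
qed

lemma int_phi_w:
  assumes "t0 \<le> \<alpha>" and w: "continuous_on {\<alpha>..\<beta>} w" and wb: "\<forall>s\<in>{\<alpha>..\<beta>}. norm (w s) \<le> B"
  shows "(\<lambda>s. (\<phi> s \<bullet> w s)^2) integrable_on {\<alpha>..\<beta>}"
proof -
  obtain S where S: "finite S" "continuous_on ({\<alpha>..\<beta>}-S) \<phi>" using pcw[OF assms(1)] by blast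
  show ?thesis
  proof (rule pc_integrable[OF S(1), where B="(M*B)^2"])
    show "continuous_on ({\<alpha>..\<beta>} - S) (\<lambda>s. (\<phi> s \<bullet> w s)\<^sup>2)"
      by (intro continuous_intros S(2) continuous_on_subset[OF w]) auto
    show "\<forall>s\<in>{\<alpha>..\<beta>}. \<bar>(\<phi> s \<bullet> w s)\<^sup>2\<bar> \<le> (M * B)\<^sup>2"
    proof
      fix s assume s: "s \<in> {\<alpha>..\<beta>}"
      have "\<bar>\<phi> s \<bullet> w s\<bar> \<le> norm (\<phi> s) * norm (w s)" by (rule Cauchy_Schwarz_ineq2)
      also have "\<dots> \<le> M * B" using bnd[of s] wb s assms(1) pos
        by (intro mult_mono) auto
      finally have "\<bar>\<phi> s \<bullet> w s\<bar>^2 \<le> (M * B)\<^sup>2"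
        by (rule power_mono) auto
      then show "\<bar>(\<phi> s \<bullet> w s)\<^sup>2\<bar> \<le> (M * B)\<^sup>2" by simp
    qed
  qed
qed

lemma int_p2: "t0 \<le> \<alpha> \<Longrightarrow> (\<lambda>s. (p s)^2) integrable_on {\<alpha>..\<beta>}"
proof -
  assume a: "t0 \<le> \<alpha>"
  obtain B where B: "\<forall>s\<in>{\<alpha>..\<beta>}. norm (z2 s) \<le> B \<and> norm (e s) \<le> B" using bounded_ze[OF a] by blast
  have "continuous_on {\<alpha>..\<beta>} (\<lambda>s. z2 s + e s)"
    using a by (auto intro!: continuous_on_add continuous_on_subset[OF contz] continuous_on_subset[OF conte])
  moreover have "\<forall>s\<in>{\<alpha>..\<beta>}. norm (z2 s + e s) \<le> B + B"
    using B by (meson add_mono norm_triangle_le)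
  ultimately show ?thesis unfolding p_def by (rule int_phi_w[OF a])
qed

lemma int_phv: "t0 \<le> \<alpha> \<Longrightarrow> (\<lambda>s. (\<phi> s \<bullet> v)^2) integrable_on {\<alpha>..\<beta>}"
  using int_phi_w[of \<alpha> \<beta> "\<lambda>_. v" "norm v"] by auto

lemma int_e2: "t0 \<le> \<alpha> \<Longrightarrow> (\<lambda>s. e s \<bullet> e s) integrable_on {\<alpha>..\<beta>}"
  by (intro integrable_continuous_interval continuous_intros; rule continuous_on_subset[OF conte]; auto)

lemma int_f2: "t0 \<le> \<alpha> \<Longrightarrow> (\<lambda>s. (z2 s - v) \<bullet> (z2 s - v)) integrable_on {\<alpha>..\<beta>}"
  by (intro integrable_continuous_interval continuous_intros; rule continuous_on_subset[OF contz]; auto)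

lemma derivV:
  assumes "t0 \<le> \<alpha>" "\<alpha> \<le> \<beta>"
  shows "V \<beta> - V \<alpha> \<le> integral {\<alpha>..\<beta>} (\<lambda>s. - a * (p s)^2 - b * (e s \<bullet> e s))"
proof -
  obtain S where S: "finite S" "\<forall>s\<in>{\<alpha><..<\<beta>}-S. (z2 has_vector_derivative d2 s) (at s) \<and> (e has_vector_derivative de s) (at s)"
    using pcw[OF assms(1)] by blast
  show ?thesis
  proof (rule deriv_cmp[OF S(1) assms(2) contV[OF assms(1)]])
    fix s assume s: "s \<in> {\<alpha><..<\<beta>}-S"
    show "(V has_real_derivative (2*(z2 s \<bullet> d2 s) + 2*(e s \<bullet> de s))) (at s)"
      unfolding V_def using S(2) s by (intro DERIV_add hd_sq) auto
    show "2*(z2 s \<bullet> d2 s) + 2*(e s \<bullet> de s) \<le> - a * (p s)^2 - b * (e s \<bullet> e s)"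
      using H1[of s] s assms by (auto simp: p_def)
  next
    show "(\<lambda>s. - a * (p s)^2 - b * (e s \<bullet> e s)) integrable_on {\<alpha>..\<beta>}"
      using int_p2[OF assms(1)] int_e2[OF assms(1)]
      by (intro integrable_diff integrable_on_mult_right) auto
  qed
qed

lemma V_mono:
  assumes "t0 \<le> \<alpha>" "\<alpha> \<le> \<beta>"
  shows "V \<beta> \<le> V \<alpha>"
proof -
  have "integral {\<alpha>..\<beta>} (\<lambda>s. - a * (p s)^2 - b * (e s \<bullet> e s)) \<le> integral {\<alpha>..\<beta>} (\<lambda>s. 0)"
    using int_p2[OF assms(1)] int_e2[OF assms(1)] pos
    by (intro integral_le integrable_diff integrable_on_mult_right)
       (auto, smt (verit) inner_ge_zero mult_nonneg_nonneg zero_le_power2)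
  then show ?thesis using derivV[OF assms] by simp
qed


lemma young2: fixes x y \<eta> :: real assumes "\<eta> > 0" shows "2*x*y \<le> \<eta>*x^2 + y^2/\<eta>"
proof -
  have "0 \<le> (\<eta>*x - y)^2/\<eta>" using assms by simp
  also have "\<dots> = \<eta>*x^2 + y^2/\<eta> - 2*x*y" using assms by (simp add: field_simps power2_eq_square)
  finally show ?thesis by simp
qed

lemma diff_sq_le: fixes u w :: "real^'n" shows "(u - w) \<bullet> (u - w) \<le> 2*(u \<bullet> u) + 2*(w \<bullet> w)"
proof -
  have "0 \<le> (u + w) \<bullet> (u + w)" by simp
  then show ?thesis by (simp add: inner_diff inner_add inner_commute)
qed

lemma f2_bound:
  assumes "t0 \<le> t" "t \<le> s" "s \<le> t+T" and \<eta>: "\<eta> > 0"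
  shows "(z2 s - z2 t) \<bullet> (z2 s - z2 t) \<le> 4*\<eta>*V t*T + (c2^2/\<eta>) * integral {t..t+T} (\<lambda>u. (p u)^2)"
proof -
  define v where "v = z2 t"
  obtain S where S: "finite S" "\<forall>u\<in>{t<..<s}-S. (z2 has_vector_derivative d2 u) (at u) \<and> (e has_vector_derivative de u) (at u)"
    using pcw[OF assms(1)] by blast
  have "(\<lambda>u. (z2 u - v) \<bullet> (z2 u - v)) s - (\<lambda>u. (z2 u - v) \<bullet> (z2 u - v)) t
      \<le> integral {t..s} (\<lambda>u. 4*\<eta>*V t + (c2^2/\<eta>) * (p u)^2)"
  proof (rule deriv_cmp[OF S(1) assms(2)])
    show "continuous_on {t..s} (\<lambda>u. (z2 u - v) \<bullet> (z2 u - v))"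
      using assms(1) by (auto intro!: continuous_intros continuous_on_subset[OF contz])
    fix u assume u: "u \<in> {t<..<s}-S"
    have dz: "((\<lambda>u. z2 u - v) has_vector_derivative d2 u) (at u)"
      using S(2) u by (auto intro!: derivative_eq_intros)
    show "((\<lambda>u. (z2 u - v) \<bullet> (z2 u - v)) has_real_derivative 2 * ((z2 u - v) \<bullet> d2 u)) (at u)"
      by (rule hd_sq[OF dz])
    have u0: "t0 \<le> u" "t \<le> u" using u assms by auto
    have "2 * ((z2 u - v) \<bullet> d2 u) \<le> 2 * (norm (z2 u - v) * norm (d2 u))"
      by (simp add: norm_cauchy_schwarz)
    also have "\<dots> \<le> 2 * (norm (z2 u - v) * (c2 * \<bar>p u\<bar>))"
      using H2[OF u0(1)] by (intro mult_left_mono) (auto simp: p_def)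
    also have "\<dots> = 2 * norm (z2 u - v) * (c2 * \<bar>p u\<bar>)" by simp
    also have "\<dots> \<le> \<eta> * (norm (z2 u - v))^2 + (c2 * \<bar>p u\<bar>)^2 / \<eta>" by (rule young2[OF \<eta>])
    also have "\<dots> = \<eta> * ((z2 u - v) \<bullet> (z2 u - v)) + (c2^2/\<eta>) * (p u)^2"
      by (simp add: power2_norm_eq_inner power_mult_distrib)
    also have "\<dots> \<le> \<eta> * (4 * V t) + (c2^2/\<eta>) * (p u)^2"
    proof -
      have "(z2 u - v) \<bullet> (z2 u - v) \<le> 2*(z2 u \<bullet> z2 u) + 2*(v \<bullet> v)" by (rule diff_sq_le)
      also have "\<dots> \<le> 2 * V u + 2 * V t" unfolding V_def v_def by (simp add: add_mono)
      also have "\<dots> \<le> 4 * V t" using V_mono[OF assms(1) u0(2)] by simp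
      finally show ?thesis using \<eta> by simp
    qed
    finally show "2 * ((z2 u - v) \<bullet> d2 u) \<le> 4*\<eta>*V t + (c2^2/\<eta>) * (p u)^2" by simp
  next
    show "(\<lambda>u. 4*\<eta>*V t + (c2^2/\<eta>) * (p u)^2) integrable_on {t..s}"
      by (rule integrable_add[OF _ integrable_on_mult_right[OF int_p2[OF assms(1)]]]) (intro integrable_continuous_interval continuous_on_const)
  qed
  also have "\<dots> = 4*\<eta>*V t*(s-t) + (c2^2/\<eta>) * integral {t..s} (\<lambda>u. (p u)^2)"
    by (subst integral_add[OF integrable_continuous_interval[OF continuous_on_const] integrable_on_mult_right[OF int_p2[OF assms(1)]]], subst integral_mult_right) (simp add: assms(2))
  also have "\<dots> \<le> 4*\<eta>*V t*T + (c2^2/\<eta>) * integral {t..t+T} (\<lambda>u. (p u)^2)"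
  proof (rule add_mono)
    show "4*\<eta>*V t*(s-t) \<le> 4*\<eta>*V t*T" using assms \<eta> V_nonneg[of t] by (intro mult_left_mono) auto
    have "integral {t..s} (\<lambda>u. (p u)^2) \<le> integral {t..t+T} (\<lambda>u. (p u)^2)"
      using assms int_p2[OF assms(1)] by (intro integral_subset_le) auto
    then show "(c2^2/\<eta>) * integral {t..s} (\<lambda>u. (p u)^2) \<le> (c2^2/\<eta>) * integral {t..t+T} (\<lambda>u. (p u)^2)"
      using \<eta> by (intro mult_left_mono) auto
  qed
  finally show ?thesis by (simp add: v_def)
qed

lemma e_lower:
  assumes "t0 \<le> t" "t \<le> s" "s \<le> t+r" "r \<le> T"
  shows "e t \<bullet> e t - e s \<bullet> e s \<le> c * V t * r + c' * integral {t..t+T} (\<lambda>u. (p u)^2)"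
proof -
  obtain S where S: "finite S" "\<forall>u\<in>{t<..<s}-S. (z2 has_vector_derivative d2 u) (at u) \<and> (e has_vector_derivative de u) (at u)"
    using pcw[OF assms(1)] by blast
  have "(\<lambda>u. - (e u \<bullet> e u)) s - (\<lambda>u. - (e u \<bullet> e u)) t
      \<le> integral {t..s} (\<lambda>u. c*V t + c' * (p u)^2)"
  proof (rule deriv_cmp[OF S(1) assms(2)])
    show "continuous_on {t..s} (\<lambda>u. - (e u \<bullet> e u))"
      using assms(1) by (auto intro!: continuous_intros continuous_on_subset[OF conte])
    fix u assume u: "u \<in> {t<..<s}-S"
    show "((\<lambda>u. - (e u \<bullet> e u)) has_real_derivative - (2 * (e u \<bullet> de u))) (at u)"
      using S(2) u by (intro DERIV_minus hd_sq) auto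
    have u0: "t0 \<le> u" "t \<le> u" using u assms by auto
    have "e u \<bullet> e u \<le> V t" using V_mono[OF assms(1) u0(2)] inner_ge_zero[of "z2 u"] unfolding V_def by linarith
    then have "c * (e u \<bullet> e u) \<le> c * V t" using pos(6) by (rule mult_left_mono)
    then show "- (2 * (e u \<bullet> de u)) \<le> c*V t + c' * (p u)^2"
      using H3[OF u0(1)] unfolding p_def by linarith
  next
    show "(\<lambda>u. c*V t + c' * (p u)^2) integrable_on {t..s}"
      by (rule integrable_add[OF _ integrable_on_mult_right[OF int_p2[OF assms(1)]]]) (intro integrable_continuous_interval continuous_on_const)
  qed
  also have "\<dots> = c*V t*(s-t) + c' * integral {t..s} (\<lambda>u. (p u)^2)"
    by (subst integral_add[OF integrable_continuous_interval[OF continuous_on_const] integrable_on_mult_right[OF int_p2[OF assms(1)]]], subst integral_mult_right) (simp add: assms(2))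
  also have "\<dots> \<le> c*V t*r + c' * integral {t..t+T} (\<lambda>u. (p u)^2)"
  proof (rule add_mono)
    show "c*V t*(s-t) \<le> c*V t*r" using assms pos V_nonneg[of t] by (intro mult_left_mono) auto
    have "integral {t..s} (\<lambda>u. (p u)^2) \<le> integral {t..t+T} (\<lambda>u. (p u)^2)"
      using assms int_p2[OF assms(1)] by (intro integral_subset_le) auto
    then show "c' * integral {t..s} (\<lambda>u. (p u)^2) \<le> c' * integral {t..t+T} (\<lambda>u. (p u)^2)"
      using pos by (intro mult_left_mono) auto
  qed
  finally show ?thesis by simp
qed


lemma sq3: fixes x y z :: real shows "(x - y - z)^2 \<le> 3*x^2 + 3*y^2 + 3*z^2"
proof -
  have "0 \<le> (x + y)^2 + (x + z)^2 + (y - z)^2" by simp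
  then show ?thesis by (simp add: power2_eq_square algebra_simps)
qed

lemma phi_sq: assumes "t0 \<le> u" shows "(\<phi> u \<bullet> w)^2 \<le> M^2 * (w \<bullet> w)"
proof -
  have "(\<phi> u \<bullet> w)^2 \<le> (\<phi> u \<bullet> \<phi> u) * (w \<bullet> w)" by (rule Cauchy_Schwarz_ineq)
  also have "\<phi> u \<bullet> \<phi> u \<le> M^2" using bnd[OF assms] pos(1)
    by (metis norm_ge_zero power2_norm_eq_inner power_mono)
  then have "(\<phi> u \<bullet> \<phi> u) * (w \<bullet> w) \<le> M^2 * (w \<bullet> w)" by (simp add: mult_right_mono)
  finally show ?thesis .
qed

lemma pe_step:
  assumes t: "t0 \<le> t" and \<eta>: "\<eta> > 0"
  shows "\<delta>*(z2 t \<bullet> z2 t) \<le> 3*integral {t..t+T} (\<lambda>u. (p u)^2) + 3*M^2*integral {t..t+T} (\<lambda>u. e u \<bullet> e u)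
      + 3*M^2*(T*(4*\<eta>*V t*T + (c2^2/\<eta>)*integral {t..t+T} (\<lambda>u. (p u)^2)))"
proof -
  define v where "v = z2 t"
  define I where "I = integral {t..t+T} (\<lambda>u. (p u)^2)"
  define J where "J = integral {t..t+T} (\<lambda>u. e u \<bullet> e u)"
  define B3 where "B3 = 4*\<eta>*V t*T + (c2^2/\<eta>)*I"
  define f2 where "f2 u = (z2 u - v) \<bullet> (z2 u - v)" for u
  have ip: "(\<lambda>u. (p u)^2) integrable_on {t..t+T}" by (rule int_p2[OF t])
  have ie: "(\<lambda>u. e u \<bullet> e u) integrable_on {t..t+T}" by (rule int_e2[OF t])
  have if2: "f2 integrable_on {t..t+T}" unfolding f2_def by (rule int_f2[OF t])
  have i1: "(\<lambda>u. 3 * (p u)^2) integrable_on {t..t+T}" by (rule integrable_on_mult_right[OF ip])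
  have i2: "(\<lambda>u. (3*M^2) * (e u \<bullet> e u)) integrable_on {t..t+T}" by (rule integrable_on_mult_right[OF ie])
  have i3: "(\<lambda>u. (3*M^2) * f2 u) integrable_on {t..t+T}" by (rule integrable_on_mult_right[OF if2])
  have "\<delta>*(v \<bullet> v) \<le> integral {t..t+T} (\<lambda>u. (\<phi> u \<bullet> v)^2)" by (rule PE[OF t])
  also have "\<dots> \<le> integral {t..t+T} (\<lambda>u. 3 * (p u)^2 + (3*M^2) * (e u \<bullet> e u) + (3*M^2) * f2 u)"
  proof (rule integral_le[OF int_phv[OF t] integrable_add[OF integrable_add[OF i1 i2] i3]])
    fix u assume u: "u \<in> {t..t+T}"
    then have u0: "t0 \<le> u" using t by auto
    have eq: "\<phi> u \<bullet> v = p u - \<phi> u \<bullet> e u - \<phi> u \<bullet> (z2 u - v)"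
      unfolding p_def by (simp add: inner_add_right inner_diff_right)
    have "(\<phi> u \<bullet> v)^2 \<le> 3*(p u)^2 + 3*(\<phi> u \<bullet> e u)^2 + 3*(\<phi> u \<bullet> (z2 u - v))^2"
      unfolding eq by (rule sq3)
    also have "\<dots> \<le> 3*(p u)^2 + 3*(M^2 * (e u \<bullet> e u)) + 3*(M^2 * f2 u)"
      using phi_sq[OF u0, of "e u"] phi_sq[OF u0, of "z2 u - v"] unfolding f2_def by linarith
    finally show "(\<phi> u \<bullet> v)^2 \<le> 3 * (p u)^2 + (3*M^2) * (e u \<bullet> e u) + (3*M^2) * f2 u" by simp
  qed
  also have "\<dots> = 3*I + 3*M^2*J + 3*M^2*integral {t..t+T} f2"
    unfolding I_def J_def
    by (simp add: integral_add[OF integrable_add[OF i1 i2] i3] integral_add[OF i1 i2])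
  also have "\<dots> \<le> 3*I + 3*M^2*J + 3*M^2*(T*B3)"
  proof -
    have "integral {t..t+T} f2 \<le> integral {t..t+T} (\<lambda>u. B3)"
    proof (rule integral_le[OF if2 integrable_continuous_interval[OF continuous_on_const]])
      fix u assume "u \<in> {t..t+T}"
      then show "f2 u \<le> B3" unfolding f2_def B3_def I_def v_def using f2_bound[OF t _ _ \<eta>] by auto
    qed
    also have "\<dots> = T*B3" using pos(2) by simp
    finally show ?thesis using pos(1) by (simp add: mult_left_mono)
  qed
  finally show ?thesis unfolding B3_def I_def J_def v_def .
qed


definition "\<eta> = \<delta> / (48 * M^2 * T^2)"
definition "\<tau> = T / (1 + 4*c*T)"
definition "K1 = (3 + 3*M^2*T*c2^2/\<eta>)/\<delta> + c'"
definition "K2 = 3*M^2/\<delta> + 1/\<tau>"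
definition "\<kappa> = min (min (a/(2*K1)) (b/(2*K2))) (1/2)"

lemma cst: "\<eta> > 0" "\<tau> > 0" "\<tau> \<le> T" "c*\<tau> \<le> 1/4" "K1 > 0" "K2 > 0" "\<kappa> > 0" "\<kappa> \<le> 1/2"
proof -
  show e: "\<eta> > 0" using pos by (simp add: \<eta>_def)
  have d: "1 + 4*c*T \<ge> 1" using pos by simp
  show t: "\<tau> > 0" unfolding \<tau>_def using pos d by (intro divide_pos_pos) linarith+
  have d': "1 + 4*c*T > 0" using d by linarith
  have "T/(1+4*c*T) \<le> T/1" by (rule divide_left_mono) (use pos d d' in auto)
  then show "\<tau> \<le> T" unfolding \<tau>_def by simp
  have "c*\<tau> = (c*T)/(1 + 4*c*T)" by (simp add: \<tau>_def)
  also have "\<dots> \<le> 1/4" by (subst pos_divide_le_eq[OF d']) simp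
  finally show "c*\<tau> \<le> 1/4" .
  show k1: "K1 > 0" using pos e unfolding K1_def
    by (intro add_pos_nonneg divide_pos_pos) (auto intro!: add_pos_nonneg)
  show k2: "K2 > 0" using pos t unfolding K2_def by (intro add_pos_pos) auto
  show "\<kappa> > 0" using pos k1 k2 by (simp add: \<kappa>_def)
  show "\<kappa> \<le> 1/2" by (simp add: \<kappa>_def)
qed

lemma e_step:
  assumes t: "t0 \<le> t"
  shows "e t \<bullet> e t \<le> integral {t..t+T} (\<lambda>u. e u \<bullet> e u) / \<tau> + c*V t*\<tau> + c' * integral {t..t+T} (\<lambda>u. (p u)^2)"
proof -
  define I where "I = integral {t..t+T} (\<lambda>u. (p u)^2)"
  define J where "J = integral {t..t+T} (\<lambda>u. e u \<bullet> e u)"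
  define A where "A = e t \<bullet> e t - c*V t*\<tau> - c'*I"
  have "integral {t..t+\<tau>} (\<lambda>u. A) \<le> integral {t..t+\<tau>} (\<lambda>u. e u \<bullet> e u)"
  proof (rule integral_le[OF integrable_continuous_interval[OF continuous_on_const] int_e2[OF t]])
    fix u assume "u \<in> {t..t+\<tau>}"
    then show "A \<le> e u \<bullet> e u" using e_lower[OF t, of u \<tau>] cst(3) unfolding A_def I_def by auto
  qed
  also have "\<dots> \<le> J" unfolding J_def
    using cst(2,3) by (intro integral_subset_le int_e2[OF t]) auto
  finally have "\<tau> * A \<le> J" using cst(2) by simp
  then have "A \<le> J/\<tau>" using cst(2) by (simp add: le_divide_eq mult.commute)
  then show ?thesis unfolding A_def I_def J_def by simp
qed

lemma window:
  assumes t: "t0 \<le> t"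
  shows "V (t+T) \<le> (1 - \<kappa>) * V t"
proof -
  define I where "I = integral {t..t+T} (\<lambda>u. (p u)^2)"
  define J where "J = integral {t..t+T} (\<lambda>u. e u \<bullet> e u)"
  have I0: "I \<ge> 0" unfolding I_def by (intro integral_nonneg int_p2[OF t]) auto
  have J0: "J \<ge> 0" unfolding J_def by (intro integral_nonneg int_e2[OF t]) auto
  have dec: "V (t+T) - V t \<le> - a*I - b*J"
  proof -
    have "V (t+T) - V t \<le> integral {t..t+T} (\<lambda>s. - a * (p s)^2 - b * (e s \<bullet> e s))"
      using derivV[OF t] pos(2) by simp
    also have "\<dots> = - a*I - b*J" unfolding I_def J_def
      by (subst integral_diff[OF integrable_on_mult_right[OF int_p2[OF t]] integrable_on_mult_right[OF int_e2[OF t]]],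
          subst integral_mult_right, subst integral_mult_right) simp
    finally show ?thesis .
  qed
  have pe: "\<delta>*(z2 t \<bullet> z2 t) \<le> 3*I + 3*M^2*J + 3*M^2*(T*(4*\<eta>*V t*T + (c2^2/\<eta>)*I))"
    using pe_step[OF t cst(1)] unfolding I_def J_def .
  have es: "e t \<bullet> e t \<le> J / \<tau> + c*V t*\<tau> + c' * I"
    using e_step[OF t] unfolding I_def J_def .
  have E: "3*M^2*(T*(4*\<eta>*V t*T)) = \<delta> * V t / 4"
    using pos unfolding \<eta>_def by (simp add: field_simps power2_eq_square)
  have "3*I + 3*M^2*J + 3*M^2*(T*(4*\<eta>*V t*T + (c2^2/\<eta>)*I))
      = 3*I + 3*M^2*J + 3*M^2*(T*(4*\<eta>*V t*T)) + (3*M^2*T*c2^2/\<eta>)*I"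
    by (simp add: algebra_simps)
  also have "\<dots> = \<delta> * V t / 4 + (3 + 3*M^2*T*c2^2/\<eta>) * I + 3*M^2*J"
    unfolding E by (simp add: algebra_simps)
  also have "\<dots> = \<delta> * (V t / 4 + ((3 + 3*M^2*T*c2^2/\<eta>)/\<delta>) * I + (3*M^2/\<delta>) * J)"
    using pos(3) by (simp add: field_simps)
  finally have "\<delta>*(z2 t \<bullet> z2 t) \<le> \<delta> * (V t / 4 + ((3 + 3*M^2*T*c2^2/\<eta>)/\<delta>) * I + (3*M^2/\<delta>) * J)"
    using pe by linarith
  then have z2b: "z2 t \<bullet> z2 t \<le> V t / 4 + ((3 + 3*M^2*T*c2^2/\<eta>)/\<delta>) * I + (3*M^2/\<delta>) * J"
    using pos(3) by (simp add: mult_le_cancel_left_pos)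
  have "(c*\<tau>)*V t \<le> (1/4) * V t" using cst(4) V_nonneg[of t] by (rule mult_right_mono)
  then have "c*V t*\<tau> \<le> V t / 4" by (simp add: algebra_simps)
  moreover have "K1*I = ((3 + 3*M^2*T*c2^2/\<eta>)/\<delta>) * I + c'*I" unfolding K1_def by (simp add: distrib_right)
  moreover have "K2*J = (3*M^2/\<delta>) * J + J/\<tau>" unfolding K2_def by (simp add: distrib_right)
  moreover have "V t = z2 t \<bullet> z2 t + e t \<bullet> e t" by (simp add: V_def)
  ultimately have "V t \<le> V t/2 + K1*I + K2*J"
    using z2b es by linarith
  then have Vb: "V t \<le> 2*K1*I + 2*K2*J" by simp
  have "\<kappa> * V t \<le> \<kappa> * (2*K1*I + 2*K2*J)" using Vb cst(7) by (simp add: mult_left_mono)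
  also have "\<dots> = (\<kappa>*(2*K1))*I + (\<kappa>*(2*K2))*J" by (simp add: algebra_simps)
  also have "\<dots> \<le> a*I + b*J"
  proof (rule add_mono; rule mult_right_mono)
    have "\<kappa> \<le> a/(2*K1)" unfolding \<kappa>_def by simp
    then have "\<kappa>*(2*K1) \<le> a/(2*K1)*(2*K1)" using cst(5) by (intro mult_right_mono) auto
    then show "\<kappa>*(2*K1) \<le> a" using cst(5) by simp
    have "\<kappa> \<le> b/(2*K2)" unfolding \<kappa>_def by simp
    then have "\<kappa>*(2*K2) \<le> b/(2*K2)*(2*K2)" using cst(6) by (intro mult_right_mono) auto
    then show "\<kappa>*(2*K2) \<le> b" using cst(6) by simp
  qed (use I0 J0 in auto)
  finally show ?thesis using dec by (simp add: algebra_simps)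
qed


lemma V_iter: "V (t0 + real k * T) \<le> (1-\<kappa>)^k * V t0"
proof (induction k)
  case 0 then show ?case by simp
next
  case (Suc k)
  have "t0 \<le> t0 + real k * T" using pos(2) by simp
  then have "V (t0 + real k * T + T) \<le> (1-\<kappa>) * V (t0 + real k * T)" by (rule window)
  also have "\<dots> \<le> (1-\<kappa>) * ((1-\<kappa>)^k * V t0)" using Suc.IH cst(8) by (intro mult_left_mono) auto
  finally show ?case by (simp add: algebra_simps)
qed

lemma V_exp:
  assumes t: "t0 \<le> t"
  shows "V t \<le> (1/(1-\<kappa>)) * exp (ln (1-\<kappa>) / T * (t - t0)) * V t0"
proof -
  define \<rho> where "\<rho> = 1 - \<kappa>"
  have \<rho>: "\<rho> > 0" "\<rho> < 1" using cst(7,8) by (auto simp: \<rho>_def)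
  define k where "k = nat \<lfloor>(t-t0)/T\<rfloor>"
  have q0: "(t-t0)/T \<ge> 0" using t pos(2) by simp
  have kle: "real k \<le> (t-t0)/T" unfolding k_def using q0 by linarith
  have kgt: "real k > (t-t0)/T - 1" unfolding k_def using q0 by linarith
  have "real k * T \<le> t - t0" using kle pos(2) by (simp add: le_divide_eq)
  then have "V t \<le> V (t0 + real k * T)"
    using pos(2) by (intro V_mono) auto
  also have "\<dots> \<le> \<rho>^k * V t0" using V_iter by (simp add: \<rho>_def)
  also have "\<rho>^k \<le> (1/\<rho>) * exp (ln \<rho> / T * (t - t0))"
  proof -
    have ln: "ln \<rho> < 0" using \<rho> by simp
    have "\<rho>^k = exp (real k * ln \<rho>)" using \<rho> by (simp add: exp_of_nat_mult)
    also have "\<dots> \<le> exp (((t-t0)/T - 1) * ln \<rho>)"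
      using kgt ln by (intro exp_le_cancel_iff[THEN iffD2] mult_right_mono_neg) auto
    also have "\<dots> = exp (- ln \<rho>) * exp (ln \<rho> / T * (t - t0))"
      by (simp add: exp_add[symmetric] algebra_simps)
    also have "exp (- ln \<rho>) = 1/\<rho>" using \<rho> by (simp add: exp_minus inverse_eq_divide)
    finally show ?thesis .
  qed
  then have "\<rho>^k * V t0 \<le> (1/\<rho>) * exp (ln \<rho> / T * (t - t0)) * V t0"
    using V_nonneg by (intro mult_right_mono) auto
  finally show ?thesis by (simp add: \<rho>_def)
qed

end



lemma outer_mv: "outer u v *v w = (v \<bullet> w) *\<^sub>R u"
  by (simp add: vec_eq_iff outer_def matrix_vector_mult_def inner_vec_def sum_distrib_left mult.commute mult.left_commute)

lemma PE_scalar: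
  fixes \<phi> :: "real \<Rightarrow> real^'n"
  assumes d: "\<delta> > 0" and pe: "mat_ge (integral {t..t+T} (\<lambda>s. outer (\<phi> s) (\<phi> s))) (\<delta> *\<^sub>R mat 1)"
  shows "\<delta> * (v \<bullet> v) \<le> integral {t..t+T} (\<lambda>s. (\<phi> s \<bullet> v)^2)"
proof -
  have int: "(\<lambda>s. outer (\<phi> s) (\<phi> s)) integrable_on {t..t+T}"
  proof (rule ccontr)
    assume "\<not> ?thesis"
    then have "integral {t..t+T} (\<lambda>s. outer (\<phi> s) (\<phi> s)) = 0" by (simp add: not_integrable_integral)
    then have "0 \<le> axis i 1 \<bullet> ((0 - \<delta> *\<^sub>R mat 1) *v axis i (1::real))" for i :: 'n
      using pe unfolding mat_ge_def by metis
    moreover have "axis i 1 \<bullet> ((0 - \<delta> *\<^sub>R mat 1) *v axis i (1::real)) = - \<delta>" for i :: 'n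
    proof -
      have "(0 - \<delta> *\<^sub>R mat 1) *v w = (-\<delta>) *\<^sub>R w" for w :: "real^'n"
        by (simp add: scaleR_matrix_vector_assoc[symmetric] flip: scaleR_minus_left)
      then show ?thesis by (simp add: inner_axis_axis)
    qed
    ultimately show False using d by (metis neg_0_le_iff_le not_le)
  qed
  define h where "h A = v \<bullet> (A *v v)" for A :: "real^'n^'n"
  have lin: "bounded_linear h"
    unfolding linear_conv_bounded_linear[symmetric] h_def
    by (rule linearI) (simp_all add: matrix_vector_mult_add_rdistrib inner_add_right
        scaleR_matrix_vector_assoc[symmetric])
  have eq: "(\<lambda>s. (\<phi> s \<bullet> v)^2) = h \<circ> (\<lambda>s. outer (\<phi> s) (\<phi> s))"
    by (rule ext) (simp add: h_def outer_mv power2_eq_square inner_commute)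
  have "0 \<le> v \<bullet> ((integral {t..t+T} (\<lambda>s. outer (\<phi> s) (\<phi> s)) - \<delta> *\<^sub>R mat 1) *v v)"
    using pe unfolding mat_ge_def by blast
  also have "\<dots> = h (integral {t..t+T} (\<lambda>s. outer (\<phi> s) (\<phi> s))) - \<delta> * (v \<bullet> v)"
    by (simp add: h_def matrix_vector_mult_diff_rdistrib inner_diff_right scaleR_matrix_vector_assoc[symmetric])
  also have "h (integral {t..t+T} (\<lambda>s. outer (\<phi> s) (\<phi> s))) = integral {t..t+T} (\<lambda>s. (\<phi> s \<bullet> v)^2)"
    unfolding eq by (rule integral_linear[OF int lin, symmetric])
  finally show ?thesis by simp
qed

lemma sol_deriv:
  fixes K :: "'u::metric_space \<Rightarrow> 'a::euclidean_space \<Rightarrow> 'a" and \<phi> :: "real \<Rightarrow> 'u"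
  assumes sol: "is_solution (\<lambda>s y. K (\<phi> s) y) t0 x0 x"
    and Kc: "continuous_on UNIV (\<lambda>q. K (fst q) (snd q))"
    and s: "t0 < s" and \<phi>c: "isCont \<phi> s"
  shows "(x has_vector_derivative K (\<phi> s) (x s)) (at s)"
proof -
  define g where "g u = K (\<phi> u) (x u)" for u
  have xc: "continuous_on {t0..} x" and x0: "x t0 = x0"
    and hi: "\<And>t. t \<ge> t0 \<Longrightarrow> (g has_integral (x t - x0)) {t0..t}"
    using sol unfolding is_solution_def g_def by auto
  have gi: "g integrable_on {t0..s+1}" using hi[of "s+1"] s by auto
  have xe: "x u = x0 + integral {t0..u} g" if "u \<in> {t0..s+1}" for u
    using hi[of u] that by (auto simp: integral_unique)
  have int: "s \<in> interior {t0..s+1}" using s by auto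
  have xcs: "isCont x s"
  proof -
    have "continuous_on {t0<..} x" by (rule continuous_on_subset[OF xc]) auto
    then show ?thesis using s by (simp add: continuous_on_eq_continuous_at)
  qed
  have gc: "isCont g s"
  proof -
    have "isCont (\<lambda>u. (\<phi> u, x u)) s" using \<phi>c xcs by (intro continuous_intros)
    moreover have "isCont (\<lambda>q. K (fst q) (snd q)) (\<phi> s, x s)"
      using Kc by (simp add: continuous_on_eq_continuous_at)
    ultimately have "isCont (\<lambda>u. (\<lambda>q. K (fst q) (snd q)) ((\<lambda>u. (\<phi> u, x u)) u)) s" by (rule isCont_o2)
    then show ?thesis by (simp add: g_def[abs_def])
  qed
  have "((\<lambda>u. integral {t0..u} g) has_vector_derivative g s) (at s within ({t0..s+1} - {}))"
    by (rule integral_has_vector_derivative_continuous_at[OF gi])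
       (use s gc in \<open>auto intro: continuous_at_imp_continuous_within\<close>)
  then have "((\<lambda>u. integral {t0..u} g) has_vector_derivative g s) (at s)"
    using at_within_interior[OF int] by simp
  then have d: "((\<lambda>u. x0 + integral {t0..u} g) has_vector_derivative g s) (at s)"
    by (auto intro!: derivative_eq_intros)
  show ?thesis unfolding g_def[symmetric]
    by (rule has_vector_derivative_transform_within_open[OF d, of "{t0<..<s+1}"])
       (use s xe in auto)
qed




definition kapG :: "real \<Rightarrow> real \<Rightarrow> real \<Rightarrow> real \<Rightarrow> real \<Rightarrow> real \<Rightarrow> real \<Rightarrow> real \<Rightarrow> real" where
  "kapG M T \<delta> a b c c' cq =
    min (min (a/(2*((3 + 3*M^2*T*cq^2/(\<delta> / (48 * M^2 * T^2)))/\<delta> + c')))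
             (b/(2*(3*M^2/\<delta> + 1/(T / (1 + 4*c*T)))))) (1/2)"

lemma (in core) kap_eq: "\<kappa> = kapG M T \<delta> a b c c' c2"
  by (simp add: \<kappa>_def K1_def K2_def \<eta>_def \<tau>_def kapG_def)

lemma kapG_bounds:
  assumes pos: "M > 0" "T > 0" "\<delta> > 0" "a > 0" "b > 0" "c \<ge> 0" "c' \<ge> 0" "cq \<ge> 0"
  shows "kapG M T \<delta> a b c c' cq > 0" "kapG M T \<delta> a b c c' cq \<le> 1/2"
proof -
  define \<eta> where "\<eta> = \<delta> / (48 * M^2 * T^2)"
  define \<tau> where "\<tau> = T / (1 + 4*c*T)"
  define K1 where "K1 = (3 + 3*M^2*T*cq^2/\<eta>)/\<delta> + c'"
  define K2 where "K2 = 3*M^2/\<delta> + 1/\<tau>"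
  have e: "\<eta> > 0" using pos by (simp add: \<eta>_def)
  have d: "1 + 4*c*T \<ge> 1" using pos by simp
  have t: "\<tau> > 0" unfolding \<tau>_def using pos d by (intro divide_pos_pos) linarith+
  have k1: "K1 > 0" using pos e unfolding K1_def
    by (intro add_pos_nonneg divide_pos_pos) (auto intro!: add_pos_nonneg)
  have k2: "K2 > 0" using pos t unfolding K2_def by (intro add_pos_pos) auto
  have eq: "kapG M T \<delta> a b c c' cq = min (min (a/(2*K1)) (b/(2*K2))) (1/2)"
    by (simp add: kapG_def K1_def K2_def \<eta>_def \<tau>_def)
  show "kapG M T \<delta> a b c c' cq > 0" unfolding eq using pos k1 k2 by simp
  show "kapG M T \<delta> a b c c' cq \<le> 1/2" unfolding eq by simp
qed

lemma norm_pair_sq: "(norm (u, w))^2 = (norm u)^2 + (norm w)^2"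
  by (simp add: norm_Pair)

lemma sol_bound:
  fixes \<phi> :: "real \<Rightarrow> real^'n" and \<theta>s :: "real^'n"
    and F :: "real \<Rightarrow> ((real^'n) \<times> (real^'n)) \<Rightarrow> ((real^'n) \<times> (real^'n))"
    and K :: "real^'n \<Rightarrow> ((real^'n) \<times> (real^'n)) \<Rightarrow> ((real^'n) \<times> (real^'n))"
  assumes pc: "piecewise_continuous_nonneg \<phi>"
    and bound: "\<forall>t\<ge>0. norm (\<phi> t) \<le> M"
    and pos: "M > 0" "T > 0" "\<delta> > 0" "a > 0" "b > 0" "c \<ge> 0" "c' \<ge> 0" "cq \<ge> 0"
    and PE: "\<And>t v. t \<ge> 0 \<Longrightarrow> \<delta> * (v \<bullet> v) \<le> integral {t..t+T} (\<lambda>s. (\<phi> s \<bullet> v)^2)"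
    and FK: "\<And>s y. F s y = K (\<phi> s) y"
    and Kc: "continuous_on UNIV (\<lambda>q. K (fst q) (snd q))"
    and P1: "\<And>s y. s \<ge> 0 \<Longrightarrow> 2*((snd y - \<theta>s) \<bullet> snd (F s y)) + 2*((fst y - snd y) \<bullet> (fst (F s y) - snd (F s y)))
                \<le> -a*(\<phi> s \<bullet> (fst y - \<theta>s))^2 - b*((fst y - snd y) \<bullet> (fst y - snd y))"
    and P2: "\<And>s y. s \<ge> 0 \<Longrightarrow> norm (snd (F s y)) \<le> cq * \<bar>\<phi> s \<bullet> (fst y - \<theta>s)\<bar>"
    and P3: "\<And>s y. s \<ge> 0 \<Longrightarrow> 2*((fst y - snd y) \<bullet> (fst (F s y) - snd (F s y)))
                \<ge> -c*((fst y - snd y) \<bullet> (fst y - snd y)) - c'*(\<phi> s \<bullet> (fst y - \<theta>s))^2"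
    and t00: "0 \<le> t0" and sol: "is_solution F t0 x0 x" and tt: "t0 \<le> t"
  shows "norm (x t - (\<theta>s, \<theta>s)) \<le> (3 / sqrt (1 - kapG M T \<delta> a b c c' cq)) * norm (x0 - (\<theta>s, \<theta>s))
     * exp (- (- ln (1 - kapG M T \<delta> a b c c' cq) / (2*T)) * (t - t0))"
proof -
  define \<kappa>0 where "\<kappa>0 = kapG M T \<delta> a b c c' cq"
  define \<rho> where "\<rho> = 1 - \<kappa>0"
  have \<rho>: "\<rho> > 0" "\<rho> < 1" using kapG_bounds[OF pos] unfolding \<rho>_def \<kappa>0_def by auto
  define C where "C = 3 / sqrt \<rho>"
  define \<alpha> where "\<alpha> = - ln \<rho> / (2*T)"
  have C: "C > 0" using \<rho> by (simp add: C_def)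
  have Feq: "F = (\<lambda>s y. K (\<phi> s) y)" using FK by (intro ext) auto
  define g where "g s = F s (x s)" for s
  define z2f where "z2f s = snd (x s) - \<theta>s" for s
  define ef where "ef s = fst (x s) - snd (x s)" for s
  define d2f where "d2f s = snd (g s)" for s
  define def where "def s = fst (g s) - snd (g s)" for s
  have xc: "continuous_on {t0..} x" and x0: "x t0 = x0"
    using sol unfolding is_solution_def by auto
  have sol': "is_solution (\<lambda>s y. K (\<phi> s) y) t0 x0 x" using sol Feq by simp
  have ze: "z2f s + ef s = fst (x s) - \<theta>s" for s by (simp add: z2f_def ef_def)
  interpret core \<phi> z2f ef d2f def t0 M T \<delta> a b c c' cq
  proof
    show "M > 0" "T > 0" "\<delta> > 0" "a > 0" "b > 0" "c \<ge> 0" "c' \<ge> 0" "cq \<ge> 0" using pos by auto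
    show "\<And>s. t0 \<le> s \<Longrightarrow> norm (\<phi> s) \<le> M" using bound t00 by auto
    show "continuous_on {t0..} z2f" unfolding z2f_def by (intro continuous_intros xc)
    show "continuous_on {t0..} ef" unfolding ef_def by (intro continuous_intros xc)
    show "\<And>s. t0 \<le> s \<Longrightarrow> 2 * (z2f s \<bullet> d2f s) + 2 * (ef s \<bullet> def s)
        \<le> - a * (\<phi> s \<bullet> (z2f s + ef s))\<^sup>2 - b * (ef s \<bullet> ef s)"
      unfolding ze using P1 t00 by (auto simp: z2f_def ef_def d2f_def def_def g_def)
    show "\<And>s. t0 \<le> s \<Longrightarrow> norm (d2f s) \<le> cq * \<bar>\<phi> s \<bullet> (z2f s + ef s)\<bar>"
      unfolding ze using P2 t00 by (auto simp: d2f_def g_def)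
    show "\<And>s. t0 \<le> s \<Longrightarrow> - c * (ef s \<bullet> ef s) - c' * (\<phi> s \<bullet> (z2f s + ef s))\<^sup>2 \<le> 2 * (ef s \<bullet> def s)"
      unfolding ze using P3 t00 by (auto simp: ef_def def_def g_def)
    show "\<And>t v. t0 \<le> t \<Longrightarrow> \<delta> * (v \<bullet> v) \<le> integral {t..t + T} (\<lambda>s. (\<phi> s \<bullet> v)\<^sup>2)"
      using PE t00 by auto
    fix \<alpha>' \<beta> assume a: "t0 \<le> \<alpha>'"
    obtain S where S: "finite S" "continuous_on ({\<alpha>'..\<beta>} - S) \<phi>"
      using pc a t00 unfolding piecewise_continuous_nonneg_def by (meson order_trans)
    show "\<exists>S. finite S \<and> continuous_on ({\<alpha>'..\<beta>} - S) \<phi> \<and>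
        (\<forall>s\<in>{\<alpha>'<..<\<beta>} - S. (z2f has_vector_derivative d2f s) (at s) \<and> (ef has_vector_derivative def s) (at s))"
    proof (intro exI[of _ S] conjI S ballI)
      fix s assume s: "s \<in> {\<alpha>'<..<\<beta>} - S"
      have op: "open ({\<alpha>'<..<\<beta>} - S)" using S(1) by (simp add: open_Diff finite_imp_closed)
      have "continuous_on ({\<alpha>'<..<\<beta>} - S) \<phi>" by (rule continuous_on_subset[OF S(2)]) auto
      then have pc: "isCont \<phi> s" using op s by (simp add: continuous_on_eq_continuous_at)
      have dx: "(x has_vector_derivative g s) (at s)"
        unfolding g_def FK using sol_deriv[OF sol' Kc _ pc] s a by auto
      show "(z2f has_vector_derivative d2f s) (at s)"
        unfolding z2f_def d2f_def
        using bounded_linear.has_vector_derivative[OF bounded_linear_snd dx]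
        by (auto intro!: derivative_eq_intros)
      show "(ef has_vector_derivative def s) (at s)"
        unfolding ef_def def_def
        using bounded_linear.has_vector_derivative[OF bounded_linear_snd dx]
          bounded_linear.has_vector_derivative[OF bounded_linear_fst dx]
        by (auto intro!: derivative_eq_intros)
    qed
  qed
  have Vt: "V t \<le> (1/\<rho>) * exp (ln \<rho> / T * (t - t0)) * V t0"
    using V_exp[OF tt] kap_eq unfolding \<rho>_def \<kappa>0_def by simp
  define A where "A = fst (x t) - \<theta>s"
  define B where "B = snd (x t) - \<theta>s"
  define A0 where "A0 = fst x0 - \<theta>s"
  define B0 where "B0 = snd x0 - \<theta>s"
  have nt: "(norm (x t - (\<theta>s, \<theta>s)))^2 = A \<bullet> A + B \<bullet> B"
    by (cases "x t") (simp add: A_def B_def norm_pair_sq power2_norm_eq_inner)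
  have n0: "(norm (x0 - (\<theta>s, \<theta>s)))^2 = A0 \<bullet> A0 + B0 \<bullet> B0"
    by (cases x0) (simp add: A0_def B0_def norm_pair_sq power2_norm_eq_inner)
  have "A \<bullet> A \<le> 2*(B \<bullet> B) + 2*((A - B) \<bullet> (A - B))"
    using diff_sq_le[of B "-(A - B)"] by (simp add: inner_diff inner_commute)
  moreover have "V t = B \<bullet> B + (A - B) \<bullet> (A - B)" by (simp add: V_def z2f_def ef_def A_def B_def)
  ultimately have "A \<bullet> A + B \<bullet> B \<le> 3 * V t" using inner_ge_zero[of "A - B"] by linarith
  have V0: "V t0 \<le> 3 * (A0 \<bullet> A0 + B0 \<bullet> B0)"
  proof -
    have "ef t0 = A0 - B0" by (simp add: ef_def A0_def B0_def x0)
    then have "ef t0 \<bullet> ef t0 \<le> 2*(A0 \<bullet> A0) + 2*(B0 \<bullet> B0)" using diff_sq_le by simp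
    moreover have "z2f t0 = B0" by (simp add: z2f_def B0_def x0)
    ultimately show ?thesis unfolding V_def using inner_ge_zero[of A0] by (simp (no_asm_simp))
  qed
  define E where "E = exp (ln \<rho> / T * (t - t0))"
  have E: "E > 0" by (simp add: E_def)
  have "(norm (x t - (\<theta>s, \<theta>s)))^2 \<le> 3 * ((1/\<rho>) * E * V t0)"
    using nt \<open>A \<bullet> A + B \<bullet> B \<le> 3 * V t\<close> Vt unfolding E_def by linarith
  also have "\<dots> \<le> 3 * ((1/\<rho>) * E * (3 * (norm (x0 - (\<theta>s, \<theta>s)))^2))"
    using V0 n0 \<rho> E by (intro mult_left_mono) auto
  also have "\<dots> = (C * norm (x0 - (\<theta>s, \<theta>s)) * exp (- \<alpha> * (t - t0)))^2"
  proof -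
    have "(exp (- \<alpha> * (t - t0)))^2 = E"
      unfolding E_def \<alpha>_def using pos(2)
      by (simp add: power2_eq_square exp_add[symmetric] field_simps)
    moreover have "C^2 = 9/\<rho>" using \<rho> by (simp add: C_def power_divide)
    ultimately show ?thesis by (simp add: power_mult_distrib field_simps)
  qed
  finally have "norm (x t - (\<theta>s, \<theta>s)) \<le> C * norm (x0 - (\<theta>s, \<theta>s)) * exp (- \<alpha> * (t - t0))"
    by (rule power2_le_imp_le) (use C in auto)
  then show ?thesis unfolding C_def \<alpha>_def \<rho>_def \<kappa>0_def .
qed

lemma uges_generic:
  fixes \<phi> :: "real \<Rightarrow> real^'n" and \<theta>s :: "real^'n"
    and F :: "real \<Rightarrow> ((real^'n) \<times> (real^'n)) \<Rightarrow> ((real^'n) \<times> (real^'n))"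
    and K :: "real^'n \<Rightarrow> ((real^'n) \<times> (real^'n)) \<Rightarrow> ((real^'n) \<times> (real^'n))"
  assumes pc: "piecewise_continuous_nonneg \<phi>"
    and bound: "\<forall>t\<ge>0. norm (\<phi> t) \<le> M"
    and pos: "M > 0" "T > 0" "\<delta> > 0" "a > 0" "b > 0" "c \<ge> 0" "c' \<ge> 0" "cq \<ge> 0"
    and PE: "\<And>t v. t \<ge> 0 \<Longrightarrow> \<delta> * (v \<bullet> v) \<le> integral {t..t+T} (\<lambda>s. (\<phi> s \<bullet> v)^2)"
    and FK: "\<And>s y. F s y = K (\<phi> s) y"
    and Kc: "continuous_on UNIV (\<lambda>q. K (fst q) (snd q))"
    and P1: "\<And>s y. s \<ge> 0 \<Longrightarrow> 2*((snd y - \<theta>s) \<bullet> snd (F s y)) + 2*((fst y - snd y) \<bullet> (fst (F s y) - snd (F s y)))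
                \<le> -a*(\<phi> s \<bullet> (fst y - \<theta>s))^2 - b*((fst y - snd y) \<bullet> (fst y - snd y))"
    and P2: "\<And>s y. s \<ge> 0 \<Longrightarrow> norm (snd (F s y)) \<le> cq * \<bar>\<phi> s \<bullet> (fst y - \<theta>s)\<bar>"
    and P3: "\<And>s y. s \<ge> 0 \<Longrightarrow> 2*((fst y - snd y) \<bullet> (fst (F s y) - snd (F s y)))
                \<ge> -c*((fst y - snd y) \<bullet> (fst y - snd y)) - c'*(\<phi> s \<bullet> (fst y - \<theta>s))^2"
  shows "UGES F (\<theta>s, \<theta>s)"
proof -
  define \<kappa>0 where "\<kappa>0 = kapG M T \<delta> a b c c' cq"
  define \<rho> where "\<rho> = 1 - \<kappa>0"
  have \<rho>: "\<rho> > 0" "\<rho> < 1" using kapG_bounds[OF pos] unfolding \<rho>_def \<kappa>0_def by auto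
  define C where "C = 3 / sqrt \<rho>"
  define \<alpha> where "\<alpha> = - ln \<rho> / (2*T)"
  have C: "C > 0" using \<rho> by (simp add: C_def)
  have l: "- ln \<rho> > 0" using \<rho> by simp
  have \<alpha>: "\<alpha> > 0" unfolding \<alpha>_def by (rule divide_pos_pos) (use l pos(2) in auto)
  show ?thesis unfolding UGES_def
    apply (rule exI[of _ C], rule conjI[OF C], rule exI[of _ \<alpha>], rule conjI[OF \<alpha>], intro allI impI)
    unfolding C_def \<alpha>_def \<rho>_def \<kappa>0_def
    apply (rule sol_bound[OF pc bound pos PE FK Kc P1 P2 P3])
    apply assumption+
    done
qed




lemma R1:
  fixes \<gamma> \<beta> \<mu> r E p q :: real
  assumes "\<gamma> > 0" "\<beta> > 0" "\<mu> > 0" "\<beta>*\<mu> \<ge> 2*\<gamma>" "r \<ge> 0" "E \<ge> 0" "q^2 \<le> r*E"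
  shows "2*(-\<gamma>*p*(p-q)) + 2*(-\<beta>*(1+\<mu>*r)*E + \<gamma>*p*q) \<le> -\<gamma>*p^2 - 2*\<beta>*E"
proof -
  have h1: "0 \<le> \<gamma>*(p-2*q)^2" using assms by simp
  have h2: "\<gamma>*q^2 \<le> \<gamma>*(r*E)" using assms by simp
  have h3: "0 \<le> (\<beta>*\<mu> - 2*\<gamma>)*(r*E)" using assms by simp
  show ?thesis using h1 h2 h3 by (simp add: power2_eq_square algebra_simps)
qed

lemma R2:
  fixes g g0 \<beta> r E p q :: real
  assumes "g > 0" "g*r \<le> \<beta>/2" "g0 \<le> g" "r \<ge> 0" "E \<ge> 0" "q^2 \<le> r*E"
  shows "2*(-g*p*(p-q)) + 2*(-\<beta>*E + g*p*q) \<le> -(g0/2)*p^2 - (2*\<beta>/3)*E"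
proof -
  have h1: "0 \<le> g*(3*p-4*q)^2" using assms by simp
  have h2: "g*q^2 \<le> g*(r*E)" using assms by simp
  have h3: "(g*r)*E \<le> (\<beta>/2)*E" using assms(2,5) by (rule mult_right_mono)
  have h4: "g0*p^2 \<le> g*p^2" using assms by (simp add: mult_right_mono)
  show ?thesis using h1 h2 h3 h4 by (simp add: power2_eq_square algebra_simps)
qed

lemma R3:
  fixes \<gamma> \<beta> \<mu> r E p q M :: real
  assumes "\<gamma> > 0" "\<beta> > 0" "\<mu> > 0" "r \<ge> 0" "r \<le> M^2" "E \<ge> 0" "q^2 \<le> r*E"
  shows "2*(-\<beta>*(1+\<mu>*r)*E + \<gamma>*p*q) \<ge> -(2*\<beta>*(1+\<mu>*M^2)+\<gamma>*M^2)*E - \<gamma>*p^2"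
proof -
  have h1: "0 \<le> \<gamma>*(p+q)^2" using assms by simp
  have h2: "\<gamma>*q^2 \<le> \<gamma>*(M^2*E)"
  proof -
    have "r*E \<le> M^2*E" using assms by (simp add: mult_right_mono)
    then show ?thesis using assms by simp
  qed
  have h3: "(\<beta>*\<mu>)*(r*E) \<le> (\<beta>*\<mu>)*(M^2*E)" using assms by (simp add: mult_right_mono)
  show ?thesis using h1 h2 h3 by (simp add: power2_eq_square algebra_simps)
qed

lemma R4:
  fixes \<gamma> g \<beta> r E p q M :: real
  assumes "g > 0" "g \<le> \<gamma>" "r \<le> M^2" "E \<ge> 0" "q^2 \<le> r*E"
  shows "2*(-\<beta>*E + g*p*q) \<ge> -(2*\<beta>+\<gamma>*M^2)*E - \<gamma>*p^2"
proof -
  have h1: "0 \<le> g*(p+q)^2" using assms by simp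
  have "q^2 \<le> M^2*E" using assms by (meson mult_right_mono order_trans)
  then have h2: "g*q^2 \<le> \<gamma>*(M^2*E)"
    using assms by (meson mult_mono order_trans zero_le_power2 mult_nonneg_nonneg order_less_imp_le)
  have h4: "g*p^2 \<le> \<gamma>*p^2" using assms by (simp add: mult_right_mono)
  show ?thesis using h1 h2 h4 by (simp add: power2_eq_square algebra_simps)
qed




definition K1f :: "real \<Rightarrow> real \<Rightarrow> real \<Rightarrow> real^'n \<Rightarrow> real^'n \<Rightarrow> (real^'n) \<times> (real^'n) \<Rightarrow> (real^'n) \<times> (real^'n)" where
  "K1f \<beta> \<gamma> \<mu> \<theta>s u y = (-(\<beta>*(1+\<mu>*(u \<bullet> u))) *\<^sub>R (fst y - snd y), -\<gamma> *\<^sub>R ((u \<bullet> (fst y - \<theta>s)) *\<^sub>R u))"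

definition K2f :: "real \<Rightarrow> real \<Rightarrow> real \<Rightarrow> real^'n \<Rightarrow> real^'n \<Rightarrow> (real^'n) \<times> (real^'n) \<Rightarrow> (real^'n) \<times> (real^'n)" where
  "K2f \<beta> \<gamma> \<mu> \<theta>s u y = (-\<beta> *\<^sub>R (fst y - snd y), -(\<gamma>/(1+\<mu>*(u \<bullet> u))) *\<^sub>R ((u \<bullet> (fst y - \<theta>s)) *\<^sub>R u))"

lemma sys1_K: "sys1 \<beta> \<gamma> \<mu> \<phi> \<theta>s s y = K1f \<beta> \<gamma> \<mu> \<theta>s (\<phi> s) y"
  by (simp add: sys1_def K1f_def Nt_def outer_mv)

lemma sys2_K: "sys2 \<beta> \<gamma> \<mu> \<phi> \<theta>s s y = K2f \<beta> \<gamma> \<mu> \<theta>s (\<phi> s) y"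
  by (simp add: sys2_def K2f_def Nt_def outer_mv)

lemma K1_cont: "continuous_on UNIV (\<lambda>q. K1f \<beta> \<gamma> \<mu> \<theta>s (fst q) (snd q))"
  unfolding K1f_def by (intro continuous_intros)

lemma K2_cont: assumes "\<mu> > 0" shows "continuous_on UNIV (\<lambda>q. K2f \<beta> \<gamma> \<mu> \<theta>s (fst q) (snd q))"
proof -
  have nz: "1 + \<mu>*(a \<bullet> a) \<noteq> 0" for a :: "real^'n"
    using assms by (smt (verit) inner_ge_zero mult_nonneg_nonneg)
  show ?thesis unfolding K2f_def by (intro continuous_intros) (use nz in auto)
qed

lemma red1:
  fixes u \<theta>s :: "real^'n" and y :: "(real^'n) \<times> (real^'n)" and k2 :: real
  shows "(snd y - \<theta>s) \<bullet> (k2 *\<^sub>R ((u \<bullet> (fst y - \<theta>s)) *\<^sub>R u))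
      = k2*((u \<bullet> (fst y - \<theta>s))*((u \<bullet> (fst y - \<theta>s)) - (u \<bullet> (fst y - snd y))))"
proof -
  have "snd y - \<theta>s = (fst y - \<theta>s) - (fst y - snd y)" by simp
  then have a: "(snd y - \<theta>s) \<bullet> u = (u \<bullet> (fst y - \<theta>s)) - (u \<bullet> (fst y - snd y))"
    by (metis inner_commute inner_diff_right)
  show ?thesis by (simp only: inner_scaleR_right a)
qed

lemma red2:
  fixes u \<theta>s :: "real^'n" and y :: "(real^'n) \<times> (real^'n)" and k1 k2 :: real
  shows "(fst y - snd y) \<bullet> (k1 *\<^sub>R (fst y - snd y) - k2 *\<^sub>R ((u \<bullet> (fst y - \<theta>s)) *\<^sub>R u))
      = k1*((fst y - snd y) \<bullet> (fst y - snd y)) - k2*((u \<bullet> (fst y - \<theta>s))*(u \<bullet> (fst y - snd y)))"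
proof -
  have b: "(fst y - snd y) \<bullet> u = u \<bullet> (fst y - snd y)" by (rule inner_commute)
  show ?thesis by (simp only: inner_diff_right inner_scaleR_right b)
qed

lemma basic_facts:
  fixes u e :: "real^'n"
  assumes "norm u \<le> M"
  shows "u \<bullet> u \<le> M^2" "u \<bullet> u \<ge> 0" "e \<bullet> e \<ge> 0" "(u \<bullet> e)^2 \<le> (u \<bullet> u) * (e \<bullet> e)"
proof -
  show "u \<bullet> u \<le> M^2" using assms by (metis norm_ge_zero power2_norm_eq_inner power_mono)
  show "u \<bullet> u \<ge> 0" "e \<bullet> e \<ge> 0" by simp_all
  show "(u \<bullet> e)^2 \<le> (u \<bullet> u) * (e \<bullet> e)" by (rule Cauchy_Schwarz_ineq)
qed

lemma normP2:
  fixes u :: "real^'n"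
  assumes "norm u \<le> M" "\<bar>k\<bar> \<le> \<gamma>"
  shows "norm (k *\<^sub>R (P *\<^sub>R u)) \<le> (\<gamma>*M) * \<bar>P\<bar>"
proof -
  have "norm (k *\<^sub>R (P *\<^sub>R u)) = \<bar>k\<bar> * (\<bar>P\<bar> * norm u)" by (simp add: abs_mult)
  also have "\<dots> \<le> \<gamma> * (\<bar>P\<bar> * M)" using assms by (intro mult_mono) (auto intro: mult_left_mono)
  finally show ?thesis by (simp add: algebra_simps)
qed

lemma sys1_P:
  fixes u \<theta>s :: "real^'n" and y :: "(real^'n) \<times> (real^'n)"
  assumes g: "\<gamma> > 0" "\<beta> > 0" "\<mu> > 0" and gain: "\<beta> \<ge> 2*\<gamma>/\<mu>" and nu: "norm u \<le> M"
  defines "G \<equiv> K1f \<beta> \<gamma> \<mu> \<theta>s u y"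
  shows "2*((snd y - \<theta>s) \<bullet> snd G) + 2*((fst y - snd y) \<bullet> (fst G - snd G))
           \<le> -\<gamma>*(u \<bullet> (fst y - \<theta>s))^2 - (2*\<beta>)*((fst y - snd y) \<bullet> (fst y - snd y))"
    and "norm (snd G) \<le> (\<gamma>*M) * \<bar>u \<bullet> (fst y - \<theta>s)\<bar>"
    and "2*((fst y - snd y) \<bullet> (fst G - snd G))
           \<ge> -(2*\<beta>*(1+\<mu>*M^2)+\<gamma>*M^2)*((fst y - snd y) \<bullet> (fst y - snd y)) - \<gamma>*(u \<bullet> (fst y - \<theta>s))^2"
proof -
  define P where "P = u \<bullet> (fst y - \<theta>s)"
  define Q where "Q = u \<bullet> (fst y - snd y)"
  define r where "r = u \<bullet> u"
  define E where "E = (fst y - snd y) \<bullet> (fst y - snd y)"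
  have bf: "r \<le> M^2" "r \<ge> 0" "E \<ge> 0" "Q^2 \<le> r*E"
    using basic_facts(1,2)[OF nu] basic_facts(4)[OF nu, of "fst y - snd y"] unfolding r_def E_def Q_def by auto
  have bm: "\<beta>*\<mu> \<ge> 2*\<gamma>" using gain g by (simp add: pos_divide_le_eq)
  have sG: "snd G = (-\<gamma>) *\<^sub>R (P *\<^sub>R u)" by (simp add: G_def K1f_def P_def)
  have dG: "fst G - snd G = (-(\<beta>*(1+\<mu>*r))) *\<^sub>R (fst y - snd y) - (-\<gamma>) *\<^sub>R (P *\<^sub>R u)"
    by (simp add: G_def K1f_def P_def r_def)
  have e1: "(snd y - \<theta>s) \<bullet> snd G = (-\<gamma>)*(P*(P - Q))" unfolding sG P_def Q_def by (rule red1)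
  have e2: "(fst y - snd y) \<bullet> (fst G - snd G) = (-(\<beta>*(1+\<mu>*r)))*E - (-\<gamma>)*(P*Q)"
    unfolding dG P_def Q_def E_def by (rule red2)
  show "2*((snd y - \<theta>s) \<bullet> snd G) + 2*((fst y - snd y) \<bullet> (fst G - snd G))
           \<le> -\<gamma>*(u \<bullet> (fst y - \<theta>s))^2 - (2*\<beta>)*((fst y - snd y) \<bullet> (fst y - snd y))"
    using R1[OF g bm bf(2,3,4), where p=P] unfolding e1 e2 P_def[symmetric] E_def[symmetric]
    by (simp add: algebra_simps)
  show "norm (snd G) \<le> (\<gamma>*M) * \<bar>u \<bullet> (fst y - \<theta>s)\<bar>"
    unfolding sG P_def using nu g by (intro normP2) auto
  show "2*((fst y - snd y) \<bullet> (fst G - snd G))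
           \<ge> -(2*\<beta>*(1+\<mu>*M^2)+\<gamma>*M^2)*((fst y - snd y) \<bullet> (fst y - snd y)) - \<gamma>*(u \<bullet> (fst y - \<theta>s))^2"
    using R3[OF g bf(2,1,3,4), where p=P] unfolding e2 P_def[symmetric] E_def[symmetric]
    by (simp add: algebra_simps)
qed

lemma sys2_P:
  fixes u \<theta>s :: "real^'n" and y :: "(real^'n) \<times> (real^'n)"
  assumes g: "\<gamma> > 0" "\<beta> > 0" "\<mu> > 0" and gain: "\<beta> \<ge> 2*\<gamma>/\<mu>" and nu: "norm u \<le> M"
  defines "G \<equiv> K2f \<beta> \<gamma> \<mu> \<theta>s u y"
  shows "2*((snd y - \<theta>s) \<bullet> snd G) + 2*((fst y - snd y) \<bullet> (fst G - snd G))
           \<le> -(\<gamma>/(2*(1+\<mu>*M^2)))*(u \<bullet> (fst y - \<theta>s))^2 - (2*\<beta>/3)*((fst y - snd y) \<bullet> (fst y - snd y))"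
    and "norm (snd G) \<le> (\<gamma>*M) * \<bar>u \<bullet> (fst y - \<theta>s)\<bar>"
    and "2*((fst y - snd y) \<bullet> (fst G - snd G))
           \<ge> -(2*\<beta>+\<gamma>*M^2)*((fst y - snd y) \<bullet> (fst y - snd y)) - \<gamma>*(u \<bullet> (fst y - \<theta>s))^2"
proof -
  define P where "P = u \<bullet> (fst y - \<theta>s)"
  define Q where "Q = u \<bullet> (fst y - snd y)"
  define r where "r = u \<bullet> u"
  define E where "E = (fst y - snd y) \<bullet> (fst y - snd y)"
  define gg where "gg = \<gamma>/(1+\<mu>*r)"
  have bf: "r \<le> M^2" "r \<ge> 0" "E \<ge> 0" "Q^2 \<le> r*E"
    using basic_facts(1,2)[OF nu] basic_facts(4)[OF nu, of "fst y - snd y"] unfolding r_def E_def Q_def by auto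
  have bm: "\<beta>*\<mu> \<ge> 2*\<gamma>" using gain g by (simp add: pos_divide_le_eq)
  have N1: "1+\<mu>*r \<ge> 1" using g bf by simp
  have N2: "1+\<mu>*r \<le> 1+\<mu>*M^2" using g bf by simp
  have gpos: "gg > 0" unfolding gg_def using g N1 by simp
  have gle: "gg \<le> \<gamma>" unfolding gg_def using g N1 by (simp add: divide_le_eq)
  have gge: "\<gamma>/(1+\<mu>*M^2) \<le> gg" unfolding gg_def using g N1 N2 by (intro divide_left_mono mult_pos_pos) linarith+
  have ggr: "gg*r \<le> \<beta>/2"
  proof -
    have "2*\<gamma>*r \<le> \<beta>*(1+\<mu>*r)"
    proof -
      have "2*\<gamma>*r \<le> (\<beta>*\<mu>)*r" using bm bf by (simp add: mult_right_mono)
      then show ?thesis using g by (simp add: algebra_simps)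
    qed
    then show ?thesis unfolding gg_def using N1 by (simp add: field_simps)
  qed
  have sG: "snd G = (-gg) *\<^sub>R (P *\<^sub>R u)" by (simp add: G_def K2f_def P_def gg_def r_def)
  have dG: "fst G - snd G = (-\<beta>) *\<^sub>R (fst y - snd y) - (-gg) *\<^sub>R (P *\<^sub>R u)"
    by (simp add: G_def K2f_def P_def r_def gg_def)
  have e1: "(snd y - \<theta>s) \<bullet> snd G = (-gg)*(P*(P - Q))" unfolding sG P_def Q_def by (rule red1)
  have e2: "(fst y - snd y) \<bullet> (fst G - snd G) = (-\<beta>)*E - (-gg)*(P*Q)"
    unfolding dG P_def Q_def E_def by (rule red2)
  show "2*((snd y - \<theta>s) \<bullet> snd G) + 2*((fst y - snd y) \<bullet> (fst G - snd G))
           \<le> -(\<gamma>/(2*(1+\<mu>*M^2)))*(u \<bullet> (fst y - \<theta>s))^2 - (2*\<beta>/3)*((fst y - snd y) \<bullet> (fst y - snd y))"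
    using R2[OF gpos ggr gge bf(2,3,4), where p=P] unfolding e1 e2 P_def[symmetric] E_def[symmetric]
    by (simp add: algebra_simps)
  show "norm (snd G) \<le> (\<gamma>*M) * \<bar>u \<bullet> (fst y - \<theta>s)\<bar>"
    unfolding sG P_def using nu gpos gle by (intro normP2) auto
  show "2*((fst y - snd y) \<bullet> (fst G - snd G))
           \<ge> -(2*\<beta>+\<gamma>*M^2)*((fst y - snd y) \<bullet> (fst y - snd y)) - \<gamma>*(u \<bullet> (fst y - \<theta>s))^2"
    using R4[OF gpos gle bf(1,3,4), where \<beta>=\<beta> and p=P] unfolding e2 P_def[symmetric] E_def[symmetric]
    by (simp add: algebra_simps)
qed




theorem mainTheorem3:
  fixes \<phi> :: "real \<Rightarrow> real ^ 'n" and \<theta>s :: "real ^ 'n"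
    and \<beta> \<gamma> \<mu> M T \<delta> :: real
  assumes pc: "piecewise_continuous_nonneg \<phi>"
    and M: "M > 0" and bound: "\<forall>t\<ge>0. norm (\<phi> t) \<le> M"
    and T: "T > 0" and \<delta>: "\<delta> > 0"
    and PE: "\<forall>t\<ge>0. mat_ge (integral {t..t+T} (\<lambda>s. outer (\<phi> s) (\<phi> s))) (\<delta> *\<^sub>R mat 1)"
    and \<beta>: "\<beta> > 0" and \<gamma>: "\<gamma> > 0" and \<mu>: "\<mu> > 0"
    and gain: "\<beta> \<ge> 2 * \<gamma> / \<mu>"
  shows "UGES (sys1 \<beta> \<gamma> \<mu> \<phi> \<theta>s) (\<theta>s, \<theta>s) \<and> UGES (sys2 \<beta> \<gamma> \<mu> \<phi> \<theta>s) (\<theta>s, \<theta>s)"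
proof
  have PEs: "\<And>t v. t \<ge> 0 \<Longrightarrow> \<delta> * (v \<bullet> v) \<le> integral {t..t+T} (\<lambda>s. (\<phi> s \<bullet> v)^2)"
    using PE PE_scalar[OF \<delta>] by blast
  have nu: "\<And>s. s \<ge> 0 \<Longrightarrow> norm (\<phi> s) \<le> M" using bound by auto
  have c1: "0 \<le> 2*\<beta>*(1+\<mu>*M^2)+\<gamma>*M^2" using \<beta> \<gamma> \<mu> by (intro add_nonneg_nonneg mult_nonneg_nonneg) auto
  have c2: "0 \<le> 2*\<beta>+\<gamma>*M^2" using \<beta> \<gamma> by (intro add_nonneg_nonneg mult_nonneg_nonneg) auto
  have a2: "0 < \<gamma>/(2*(1+\<mu>*M^2))" using \<gamma> \<mu> by (intro divide_pos_pos) (auto intro!: add_pos_nonneg)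
  show "UGES (sys1 \<beta> \<gamma> \<mu> \<phi> \<theta>s) (\<theta>s, \<theta>s)"
    apply (rule uges_generic[where K="K1f \<beta> \<gamma> \<mu> \<theta>s" and a=\<gamma> and b="2*\<beta>"
          and c="2*\<beta>*(1+\<mu>*M^2)+\<gamma>*M^2" and c'=\<gamma> and cq="\<gamma>*M" and M=M and T=T and \<delta>=\<delta>])
    using pc bound M T \<delta> \<gamma> \<beta> c1 PEs K1_cont apply (simp_all add: sys1_K)[13]
    using sys1_P[OF \<gamma> \<beta> \<mu> gain nu] K1_cont apply (simp_all add: sys1_K)
    apply (rule K1_cont)
    done
  show "UGES (sys2 \<beta> \<gamma> \<mu> \<phi> \<theta>s) (\<theta>s, \<theta>s)"
    apply (rule uges_generic[where K="K2f \<beta> \<gamma> \<mu> \<theta>s" and a="\<gamma>/(2*(1+\<mu>*M^2))" and b="2*\<beta>/3"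
          and c="2*\<beta>+\<gamma>*M^2" and c'=\<gamma> and cq="\<gamma>*M" and M=M and T=T and \<delta>=\<delta>])
    using pc bound M T \<delta> \<gamma> \<beta> c2 a2 PEs K2_cont[OF \<mu>] apply (simp_all add: sys2_K)[13]
    using sys2_P[OF \<gamma> \<beta> \<mu> gain nu] K2_cont[OF \<mu>] apply (simp_all add: sys2_K)
    apply (rule K2_cont[OF \<mu>])
    done
qed


end
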